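(* Let $i\in\{2,\dots,n\}$ and let $j\in\{1,\dots,i-1\}$ be the index of the disk that eliminates $D_i$, i.e., $t_i=t(i,j)$. Then \[ d\big(\nu(D_i^{t_i}),\nu(D_j^{t_i})\big)\le 2\big(|\nu(D_i^{t_i})|+|\nu(D_j^{t_i})|\big) \] and \[ \frac{1}{4\Delta}\le \frac{|\nu(D_i^{t_i})|}{|\nu(D_j^{t_i})|}\le 4\Delta. \]
   Context: Growing prioritized disks: centers $p_1,\dots,p_n\in[0,1]^2$ (pairwise distinct) and growth rates $v_1,\dots,v_n>0$; at time $t\ge0$ the disk $D_i^t$ is centered at $p_i$ with radius $tv_i$. Smaller index means higher priority; $t(i,j)=|p_ip_j|/(v_i+v_j)$. Whenever $D_i,D_j$ with $i<j$ touch at time $t(i,j)$ and neither has been removed before, $D_j$ is removed and $D_i$ keeps growing; $t_i$ is the time $D_i$ is removed ($t_1=\infty$); all $t(i,j)$ are pairwise distinct. $\Delta=\max_i v_i/\min_j v_j$. Quadtree $\mathcal{Q}$: a rooted tree in which each internal node has four children and each node $\nu$ has a square cell $b(\nu)$; the root cell is $[0,1]^2$ and a node's cell is split into four congruent quadrants giving its children's cells; subdivision stops when each cell at the bottom level contains at most one disk center and any cell containing a disk center is surrounded by two layers of empty cells. $|\nu|$ is the diameter of $b(\nu)$, and $d(\nu,\nu')$ is the smallest distance between a point of $b(\nu)$ and a point of $b(\nu')$. The disk $D_i^t$ occupies node $\nu$ if (i) $p_i\in b(\nu)$, (ii) $\nu$ is a leaf or $b(\nu)\subseteq D_i^t$,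 and (iii) $D_i$ has not been eliminated by time $t$. $\nu(D_i^t)$ denotes the node with the largest cell of $\mathcal{Q}$ that is occupied by $D_i^t$. *)

theory Defs
  imports "HOL-Analysis.Analysis"
begin

text \<open>Disks are indexed by 1..n; centers p :: nat => real*real (Euclidean plane),
 growth rates v :: nat => real.\<close>

definition touch_time :: "(nat \<Rightarrow> real \<times> real) \<Rightarrow> (nat \<Rightarrow> real) \<Rightarrow> nat \<Rightarrow> nat \<Rightarrow> real" where
  "touch_time p v i j = dist (p i) (p j) / (v i + v j)"

text \<open>elim_table p v m k gives the elimination time t_k for all k < m.
 A disk D_k is removed at the first time t(k,j) with j < k at which D_j is still present,
 i.e. t(k,j) < t_j (disks of lower priority never remove D_k).  Inf of the empty set is
 infinity, so t_1 = infinity.\<close>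
primrec elim_table :: "(nat \<Rightarrow> real \<times> real) \<Rightarrow> (nat \<Rightarrow> real) \<Rightarrow> nat \<Rightarrow> nat \<Rightarrow> ereal" where
  "elim_table p v 0 = (\<lambda>_. \<infinity>)"
| "elim_table p v (Suc m) = (elim_table p v m)(m :=
      Inf {ereal (touch_time p v m j) | j. 1 \<le> j \<and> j < m \<and>
             ereal (touch_time p v m j) < elim_table p v m j})"

definition elim_time :: "(nat \<Rightarrow> real \<times> real) \<Rightarrow> (nat \<Rightarrow> real) \<Rightarrow> nat \<Rightarrow> ereal" where
  "elim_time p v k = elim_table p v (Suc k) k"

text \<open>Quadtree nodes: (k, a, b) is the cell of level k (side 1/2^k) with lower-left corner
 (a/2^k, b/2^k).  Cells are closed squares.\<close>
type_synonym qnode = "nat \<times> nat \<times> nat"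

definition cell :: "qnode \<Rightarrow> (real \<times> real) set" where
  "cell N = (case N of (k, a, b) \<Rightarrow>
     {(x, y). real a / 2 ^ k \<le> x \<and> x \<le> (real a + 1) / 2 ^ k \<and>
              real b / 2 ^ k \<le> y \<and> y \<le> (real b + 1) / 2 ^ k})"

text \<open>The 5x5 block of same-size cells consisting of the cell and its two surrounding layers.\<close>
definition block :: "qnode \<Rightarrow> (real \<times> real) set" where
  "block N = (case N of (k, a, b) \<Rightarrow>
     {(x, y). (real a - 2) / 2 ^ k \<le> x \<and> x \<le> (real a + 3) / 2 ^ k \<and>
              (real b - 2) / 2 ^ k \<le> y \<and> y \<le> (real b + 3) / 2 ^ k})"

text \<open>A cell is subdivided iff it violates the stopping rule: it contains a center q and
 another center lies in the cell or in its two surrounding layers of cells.\<close>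
definition splits :: "(nat \<Rightarrow> real \<times> real) \<Rightarrow> nat \<Rightarrow> qnode \<Rightarrow> bool" where
  "splits p n N \<longleftrightarrow> (\<exists>q\<in>p ` {1..n}. q \<in> cell N \<and>
       (\<exists>q'\<in>p ` {1..n}. q' \<noteq> q \<and> q' \<in> block N))"

definition in_quadtree :: "(nat \<Rightarrow> real \<times> real) \<Rightarrow> nat \<Rightarrow> qnode \<Rightarrow> bool" where
  "in_quadtree p n N = (case N of (k, a, b) \<Rightarrow>
     a < 2 ^ k \<and> b < 2 ^ k \<and>
     (\<forall>k' < k. splits p n (k', a div 2 ^ (k - k'), b div 2 ^ (k - k'))))"

definition is_leaf :: "(nat \<Rightarrow> real \<times> real) \<Rightarrow> nat \<Rightarrow> qnode \<Rightarrow> bool" where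
  "is_leaf p n N \<longleftrightarrow> in_quadtree p n N \<and> \<not> splits p n N"

text \<open>D_i^t occupies N.  Condition (iii): D_i has not been removed before time t
 (so D_i^{t_i} is still considered present at its elimination time t_i).\<close>
definition occupies :: "(nat \<Rightarrow> real \<times> real) \<Rightarrow> (nat \<Rightarrow> real) \<Rightarrow> nat \<Rightarrow> nat \<Rightarrow> real \<Rightarrow> qnode \<Rightarrow> bool" where
  "occupies p v n i t N \<longleftrightarrow> in_quadtree p n N \<and> p i \<in> cell N \<and>
     (is_leaf p n N \<or> cell N \<subseteq> cball (p i) (t * v i)) \<and> ereal t \<le> elim_time p v i"

definition largest_occupied :: "(nat \<Rightarrow> real \<times> real) \<Rightarrow> (nat \<Rightarrow> real) \<Rightarrow> nat \<Rightarrow> nat \<Rightarrow> real \<Rightarrow> qnode \<Rightarrow> bool" where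
  "largest_occupied p v n i t N \<longleftrightarrow> occupies p v n i t N \<and>
     (\<forall>N'. occupies p v n i t N' \<longrightarrow> diameter (cell N') \<le> diameter (cell N))"

end

theory Submission
  imports Defs
begin

lemma mem_cell: "q \<in> cell (k,a,b) \<longleftrightarrow> real a / 2^k \<le> fst q \<and> fst q \<le> (real a + 1)/2^k \<and> real b / 2^k \<le> snd q \<and> snd q \<le> (real b + 1)/2^k"
  by (cases q) (simp add: cell_def)

lemma mem_block: "q \<in> block (k,a,b) \<longleftrightarrow> (real a - 2) / 2^k \<le> fst q \<and> fst q \<le> (real a + 3)/2^k \<and> (real b - 2) / 2^k \<le> snd q \<and> snd q \<le> (real b + 3)/2^k"
  by (cases q) (simp add: block_def)

lemma dist_le_sq:
  fixes q q' :: "real \<times> real"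
  assumes "\<bar>fst q - fst q'\<bar> \<le> s" "\<bar>snd q - snd q'\<bar> \<le> s"
  shows "dist q q' \<le> sqrt 2 * s"
proof -
  have s0: "0 \<le> s" using assms(1) by linarith
  have h1: "(fst q - fst q')^2 \<le> s^2" using assms(1) s0
    by (metis abs_le_square_iff abs_of_nonneg)
  have h2: "(snd q - snd q')^2 \<le> s^2" using assms(2) s0
    by (metis abs_le_square_iff abs_of_nonneg)
  have "dist q q' = sqrt ((fst q - fst q')^2 + (snd q - snd q')^2)"
    by (simp add: dist_prod_def dist_real_def)
  also have "\<dots> \<le> sqrt (2 * s^2)"
    by (rule real_sqrt_le_mono) (use h1 h2 in linarith)
  also have "\<dots> = sqrt 2 * s" using s0 by (simp add: real_sqrt_mult)
  finally show ?thesis .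
qed

lemma cell_dist:
  assumes "q \<in> cell (k,a,b)" "q' \<in> cell (k,a,b)"
  shows "dist q q' \<le> sqrt 2 / 2^k"
proof -
  have e1: "(real a + 1)/2^k = real a / 2^k + 1/2^k" "(real b + 1)/2^k = real b / 2^k + 1/2^k"
    by (simp_all add: add_divide_distrib)
  have "dist q q' \<le> sqrt 2 * (1/2^k)"
  proof (rule dist_le_sq)
    show "\<bar>fst q - fst q'\<bar> \<le> 1/2^k" using assms unfolding mem_cell e1 abs_le_iff by linarith
    show "\<bar>snd q - snd q'\<bar> \<le> 1/2^k" using assms unfolding mem_cell e1 abs_le_iff by linarith
  qed
  then show ?thesis by simp
qed

lemma cell_bounded: "bounded (cell (k,a,b))"
proof -
  have "cell (k,a,b) \<subseteq> cball (real a / 2^k, real b / 2^k) (sqrt 2 / 2^k)"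
    using cell_dist[of _ k a b] by (auto simp: mem_cell)
  then show ?thesis using bounded_subset bounded_cball by blast
qed

lemma diam_cell: "diameter (cell (k,a,b)) = sqrt 2 / 2^k"
proof (rule antisym)
  show "diameter (cell (k,a,b)) \<le> sqrt 2 / 2^k"
    by (rule diameter_le) (auto simp: dist_norm[symmetric] intro: cell_dist)
next
  let ?lo = "(real a / 2^k, real b / 2^k)" and ?hi = "((real a+1) / 2^k, (real b+1) / 2^k)"
  have "?lo \<in> cell (k,a,b)" "?hi \<in> cell (k,a,b)" by (auto simp: mem_cell divide_right_mono)
  then have "dist ?lo ?hi \<le> diameter (cell (k,a,b))" using cell_bounded diameter_bounded_bound by blast
  moreover have "dist ?lo ?hi = sqrt 2 / 2^k"
  proof -
    have e1: "(real a + 1)/2^k = real a / 2^k + 1/2^k" "(real b + 1)/2^k = real b / 2^k + 1/2^k"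
      by (simp_all add: add_divide_distrib)
    have "dist ?lo ?hi = sqrt (2 * (1/2^k)^2)"
      by (simp add: dist_prod_def dist_real_def e1)
    also have "\<dots> = sqrt 2 / 2^k" by (simp add: real_sqrt_mult real_sqrt_divide)
    finally show ?thesis .
  qed
  ultimately show "sqrt 2 / 2^k \<le> diameter (cell (k,a,b))" by simp
qed

lemma idx:
  fixes x :: real assumes "0 \<le> x" "x \<le> 1"
  shows "\<exists>a::nat. a < 2^k \<and> real a / 2^k \<le> x \<and> x \<le> (real a + 1)/2^k"
proof (cases "x = 1")
  case True
  have "real (2^k - 1 :: nat) = 2^k - 1" by (simp add: of_nat_diff)
  then show ?thesis using True by (intro exI[of _ "2^k - 1"]) (auto simp: divide_simps)
next
  case False
  define a where "a = nat \<lfloor>x * 2^k\<rfloor>"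
  have ra: "real a = of_int \<lfloor>x * 2^k\<rfloor>" using assms by (simp add: a_def)
  have 1: "real a \<le> x * 2^k" using ra by linarith
  have 2: "x * 2^k < real a + 1" using ra by linarith
  have "x < 1" using False assms by simp
  then have "x * 2^k < 1 * 2^k" by (intro mult_strict_right_mono) auto
  then have "real a < 2^k" using 1 by linarith
  then have "real a < real ((2::nat)^k)" by simp
  then have "a < 2^k" by (simp only: of_nat_less_iff)
  then show ?thesis using 1 2 by (intro exI[of _ a]) (auto simp: divide_simps)
qed

lemma anc1:
  fixes x :: real
  assumes "real a / 2^k \<le> x" "x \<le> (real a+1)/2^k" "k' \<le> k"
  shows "real (a div 2^(k-k'))/2^k' \<le> x \<and> x \<le> (real (a div 2^(k-k'))+1)/2^k'"
proof -
  define m where "m = k - k'"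
  define a' where "a' = a div 2^m"
  have k: "(2::real)^k = 2^k' * 2^m" using assms(3) by (simp add: m_def power_add[symmetric])
  have n1: "a' * 2^m \<le> a" by (simp add: a'_def div_times_less_eq_dividend)
  have n2: "a + 1 \<le> (a'+1) * 2^m"
  proof -
    have "a = a' * 2^m + a mod 2^m" by (simp add: a'_def div_mult_mod_eq)
    moreover have "a mod 2^m < 2^m" by simp
    moreover have "(a'+1) * 2^m = a' * 2^m + (2::nat)^m" by simp
    ultimately show ?thesis by linarith
  qed
  have "real (a' * 2^m) \<le> real a" using n1 by (rule of_nat_mono)
  then have r1: "real a' * 2^m \<le> real a" by simp
  have "real (a + 1) \<le> real ((a'+1) * 2^m)" using n2 by (rule of_nat_mono)
  then have r2: "real a + 1 \<le> (real a' + 1) * 2^m" by (simp add: algebra_simps)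
  have "real a' / 2^k' = real a' * 2^m / 2^k" using k by simp
  also have "\<dots> \<le> real a / 2^k" using r1 by (simp add: divide_right_mono)
  finally have A: "real a' / 2^k' \<le> x" using assms(1) by linarith
  have "(real a+1)/2^k \<le> (real a' + 1) * 2^m / 2^k" using r2 by (simp add: divide_right_mono)
  also have "\<dots> = (real a' + 1) / 2^k'" using k by simp
  finally have B: "x \<le> (real a' + 1) / 2^k'" using assms(2) by linarith
  show ?thesis using A B by (simp add: a'_def m_def)
qed


lemma occ_le:
  assumes N: "largest_occupied p v n m t N" and C: "in_quadtree p n C" "p m \<in> cell C"
    "is_leaf p n C \<or> cell C \<subseteq> cball (p m) (t * v m)"
  shows "diameter (cell C) \<le> diameter (cell N)"
proof -
  have "occupies p v n m t C" using N C by (simp add: occupies_def largest_occupied_def)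
  then show ?thesis using N unfolding largest_occupied_def by blast
qed

lemma sub_cball:
  assumes "diameter (cell C) \<le> r" "q \<in> cell C"
  shows "cell C \<subseteq> cball q r"
proof -
  obtain k a b where C: "C = (k,a,b)" by (cases C)
  show ?thesis
  proof
    fix y assume "y \<in> cell C"
    then have "dist q y \<le> diameter (cell C)"
      using assms(2) cell_bounded diameter_bounded_bound C by blast
    then show "y \<in> cball q r" using assms(1) by simp
  qed
qed

lemma lower:
  assumes unit: "0 \<le> fst (p m) \<and> fst (p m) \<le> 1 \<and> 0 \<le> snd (p m) \<and> snd (p m) \<le> 1"
   and N: "largest_occupied p v n m t N" and rpos: "0 < t * v m"
  shows "min (sqrt 2) (t * v m / 2) \<le> diameter (cell N)"
proof -
  define r where "r = t * v m"
  have r0: "0 < r" using rpos r_def by simp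
  show ?thesis
  proof (cases "sqrt 2 \<le> r")
    case True
    have c1: "p m \<in> cell (0,0,0)" using unit by (simp add: mem_cell)
    have c2: "in_quadtree p n (0,0,0)" by (simp add: in_quadtree_def)
    have "cell (0,0,0) \<subseteq> cball (p m) r" using sub_cball[OF _ c1] diam_cell[of 0 0 0] True by simp
    then have "diameter (cell (0,0,0)) \<le> diameter (cell N)" using occ_le[OF N c2 c1] r_def by blast
    then show ?thesis by (simp add: diam_cell)
  next
    case False
    have ex: "\<exists>k. sqrt 2 / 2^k \<le> r"
    proof -
      obtain k where "sqrt 2 / r < 2^k" using real_arch_pow[of 2 "sqrt 2 / r"] by auto
      then have "sqrt 2 / 2^k \<le> r" using r0 by (simp add: field_simps)
      then show ?thesis by blast
    qed
    define k where "k = (LEAST k. sqrt 2 / 2^k \<le> r)"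
    have k1: "sqrt 2 / 2^k \<le> r" using LeastI_ex[OF ex] k_def by simp
    have "k \<noteq> 0"
    proof
      assume "k = 0" then show False using k1 False by simp
    qed
    then obtain k' where kk: "k = Suc k'" using not0_implies_Suc by blast
    have "\<not> (sqrt 2 / 2^k' \<le> r)" using not_less_Least[of k' "\<lambda>k. sqrt 2 / 2^k \<le> r"] k_def kk by auto
    then have k2: "r/2 < sqrt 2 / 2^k" using kk by (simp add: field_simps)
    obtain a where a: "a < 2^k" "real a / 2^k \<le> fst (p m)" "fst (p m) \<le> (real a+1)/2^k"
      using idx[of "fst (p m)" k] unit by blast
    obtain b where b: "b < 2^k" "real b / 2^k \<le> snd (p m)" "snd (p m) \<le> (real b+1)/2^k"
      using idx[of "snd (p m)" k] unit by blast
    have inC: "p m \<in> cell (k,a,b)" using a b by (simp add: mem_cell)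
    have dC: "diameter (cell (k,a,b)) = sqrt 2 / 2^k" by (rule diam_cell)
    have mn: "min (sqrt 2) (r/2) \<le> r / 2" by simp
    show ?thesis
    proof (cases "in_quadtree p n (k,a,b)")
      case True
      have "cell (k,a,b) \<subseteq> cball (p m) r" using sub_cball[OF _ inC] dC k1 by simp
      then have "diameter (cell (k,a,b)) \<le> diameter (cell N)" using occ_le[OF N True inC] r_def by blast
      then show ?thesis using dC k2 mn r_def by linarith
    next
      case False
      then have ex2: "\<exists>k'. k'<k \<and> \<not> splits p n (k', a div 2^(k-k'), b div 2^(k-k'))"
        using a(1) b(1) by (auto simp: in_quadtree_def)
      define k1 where "k1 = (LEAST k'. k'<k \<and> \<not> splits p n (k', a div 2^(k-k'), b div 2^(k-k')))"
      have h1: "k1 < k" "\<not> splits p n (k1, a div 2^(k-k1), b div 2^(k-k1))"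
        using LeastI_ex[OF ex2] k1_def by auto
      have h2: "splits p n (k'', a div 2^(k-k''), b div 2^(k-k''))" if "k'' < k1" for k''
        using not_less_Least[of k'' "\<lambda>k'. k'<k \<and> \<not> splits p n (k', a div 2^(k-k'), b div 2^(k-k'))"]
          that h1(1) k1_def by auto
      have pw: "(2::nat)^k = 2^k1 * 2^(k-k1)" using h1(1) by (simp add: power_add[symmetric])
      have dv: "x div 2^(k-k1) div 2^(k1-k'') = x div 2^(k-k'')" if "k'' < k1" for x k'' :: nat
      proof -
        have "(2::nat)^(k-k1) * 2^(k1-k'') = 2^(k-k'')" using that h1(1) by (simp add: power_add[symmetric])
        then show ?thesis by (metis div_mult2_eq)
      qed
      have qA: "in_quadtree p n (k1, a div 2^(k-k1), b div 2^(k-k1))"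
        unfolding in_quadtree_def
        using a(1) b(1) pw h2 dv by (auto intro!: less_mult_imp_div_less)
      have lA: "is_leaf p n (k1, a div 2^(k-k1), b div 2^(k-k1))" by (simp add: is_leaf_def qA h1)
      have inA: "p m \<in> cell (k1, a div 2^(k-k1), b div 2^(k-k1))"
        using anc1[OF a(2,3), of k1] anc1[OF b(2,3), of k1] h1(1) by (simp add: mem_cell)
      have "diameter (cell (k1, a div 2^(k-k1), b div 2^(k-k1))) \<le> diameter (cell N)"
        using occ_le[OF N qA inA] lA by blast
      moreover have "sqrt 2 / 2^k \<le> sqrt 2 / 2^k1"
        using h1(1) by (intro divide_left_mono power_increasing) auto
      ultimately show ?thesis using diam_cell k2 mn r_def by (metis order.trans less_imp_le)
    qed
  qed
qed

lemma upper:
  assumes N: "occupies p v n m t N" and m: "m \<in> {1..n}" "m' \<in> {1..n}" "p m' \<noteq> p m"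
  shows "diameter (cell N) \<le> 2 * (t * v m) \<or> diameter (cell N) < dist (p m) (p m')"
proof -
  obtain k a b where Nk: "N = (k,a,b)" by (cases N)
  from N have inN: "p m \<in> cell N" and c: "is_leaf p n N \<or> cell N \<subseteq> cball (p m) (t * v m)"
    by (auto simp: occupies_def)
  from c show ?thesis
  proof
    assume "is_leaf p n N"
    then have "\<not> splits p n N" by (simp add: is_leaf_def)
    moreover have "p m \<in> p ` {1..n}" "p m' \<in> p ` {1..n}" using m by auto
    ultimately have nb: "p m' \<notin> block N" using inN m(3) unfolding splits_def by blast
    have e: "(real a - 2)/2^k = real a/2^k - 2/2^k" "(real a + 3)/2^k = (real a+1)/2^k + 2/2^k"
       "(real b - 2)/2^k = real b/2^k - 2/2^k" "(real b + 3)/2^k = (real b+1)/2^k + 2/2^k"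
      by (simp_all add: diff_divide_distrib add_divide_distrib)
    have "2/2^k < \<bar>fst (p m) - fst (p m')\<bar> \<or> 2/2^k < \<bar>snd (p m) - snd (p m')\<bar>"
      using nb inN unfolding Nk mem_block mem_cell e by auto
    then have d: "2/2^k < dist (p m) (p m')"
      using dist_fst_le[of "p m" "p m'"] dist_snd_le[of "p m" "p m'"] by (auto simp: dist_real_def)
    have "sqrt 2 < 2"
    proof -
      have "sqrt 2 < sqrt 4" by (rule real_sqrt_less_mono) simp
      then show ?thesis by simp
    qed
    then have "sqrt 2 / 2^k < 2/2^k" by (simp add: divide_strict_right_mono)
    then show ?thesis using d diam_cell Nk by simp
  next
    assume sub: "cell N \<subseteq> cball (p m) (t * v m)"
    have "diameter (cell N) \<le> 2*(t * v m)"
    proof (rule diameter_le)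
      show "cell N \<noteq> {} \<or> 0 \<le> 2*(t * v m)" using inN by auto
      fix x y assume "x \<in> cell N" "y \<in> cell N"
      then have "dist (p m) x \<le> t * v m" "dist (p m) y \<le> t * v m" using sub by auto
      then show "norm (x - y) \<le> 2*(t * v m)"
        using dist_triangle[of x y "p m"] by (simp add: dist_norm[symmetric] dist_commute)
    qed
    then show ?thesis by simp
  qed
qed


lemma ratio:
  fixes di dj ri rj D s :: real
  assumes "0<di" "0<dj" "di \<le> s" "min s (rj/2) \<le> dj" "di \<le> 2*ri \<or> di < ri+rj"
    "ri \<le> D*rj" "1 \<le> D" "0<ri" "0<rj"
  shows "di \<le> 4*D*dj"
proof (cases "s \<le> rj/2")
  case True
  then have "s \<le> dj" using assms(4) by simp
  moreover have "dj \<le> 4*D*dj" using assms(2,7) by simp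
  ultimately show ?thesis using assms(3) by linarith
next
  case False
  then have r: "rj \<le> 2*dj" using assms(4) by simp
  have "D*rj \<le> D*(2*dj)" using r assms(7) by (intro mult_left_mono) auto
  moreover have "rj \<le> 2*D*dj"
  proof -
    have "(2*dj)*1 \<le> (2*dj)*D" by (rule mult_left_mono) (use assms(2,7) in auto)
    then show ?thesis using r by (simp add: algebra_simps)
  qed
  ultimately show ?thesis using assms(5,6) by linarith
qed

theorem lemma10:
  fixes n :: nat and p :: "nat \<Rightarrow> real \<times> real" and v :: "nat \<Rightarrow> real"
    and i j :: nat and Ni Nj :: qnode
  assumes unit_square: "\<forall>k\<in>{1..n}. 0 \<le> fst (p k) \<and> fst (p k) \<le> 1 \<and> 0 \<le> snd (p k) \<and> snd (p k) \<le> 1"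
    and distinct_centers: "inj_on p {1..n}"
    and pos_rates: "\<forall>k\<in>{1..n}. v k > 0"
    and distinct_times: "\<forall>a\<in>{1..n}. \<forall>b\<in>{1..n}. \<forall>c\<in>{1..n}. \<forall>d\<in>{1..n}.
        a < b \<and> c < d \<and> (a, b) \<noteq> (c, d) \<longrightarrow> touch_time p v a b \<noteq> touch_time p v c d"
    and i_range: "2 \<le> i" "i \<le> n"
    and j_range: "1 \<le> j" "j < i"
    and eliminates: "elim_time p v i = ereal (touch_time p v i j)"
    and Ni: "largest_occupied p v n i (touch_time p v i j) Ni"
    and Nj: "largest_occupied p v n j (touch_time p v i j) Nj"
  shows "setdist (cell Ni) (cell Nj) \<le> 2 * (diameter (cell Ni) + diameter (cell Nj))
       \<and> 1 / (4 * (Max (v ` {1..n}) / Min (v ` {1..n}))) \<le> diameter (cell Ni) / diameter (cell Nj)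
       \<and> diameter (cell Ni) / diameter (cell Nj) \<le> 4 * (Max (v ` {1..n}) / Min (v ` {1..n}))"
proof -
  have iI: "i \<in> {1..n}" and jI: "j \<in> {1..n}" using i_range j_range by auto
  have pij: "p i \<noteq> p j" using distinct_centers iI jI j_range(2) by (metis inj_onD less_irrefl)
  define t where "t = touch_time p v i j"
  define d where "d = dist (p i) (p j)"
  have d0: "0 < d" using pij d_def by simp
  have vi: "0 < v i" and vj: "0 < v j" using pos_rates iI jI by auto
  have t_def': "t = d / (v i + v j)" by (simp add: t_def d_def touch_time_def)
  have t0: "0 < t" using t_def' d0 vi vj by simp
  have rsum: "t * v i + t * v j = d" using t_def' vi vj by (simp add: field_simps)
  have ri0: "0 < t * v i" and rj0: "0 < t * v j" using t0 vi vj by auto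
  have oi: "occupies p v n i t Ni" and oj: "occupies p v n j t Nj"
    using Ni Nj by (auto simp: largest_occupied_def t_def)
  obtain ki ai bi where Nik: "Ni = (ki,ai,bi)" by (cases Ni)
  obtain kj aj bj where Njk: "Nj = (kj,aj,bj)" by (cases Nj)
  define di where "di = diameter (cell Ni)"
  define dj where "dj = diameter (cell Nj)"
  have di0: "0 < di" and dj0: "0 < dj" using Nik Njk by (simp_all add: di_def dj_def diam_cell)
  have dis: "di \<le> sqrt 2" and djs: "dj \<le> sqrt 2" using Nik Njk
    by (simp_all add: di_def dj_def diam_cell divide_le_eq)
  have li: "min (sqrt 2) (t * v i / 2) \<le> di"
    using lower[OF _ Ni[folded t_def] ri0] unit_square iI di_def by blast
  have lj: "min (sqrt 2) (t * v j / 2) \<le> dj"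
    using lower[OF _ Nj[folded t_def] rj0] unit_square jI dj_def by blast
  have ui: "di \<le> 2 * (t * v i) \<or> di < t * v i + t * v j"
    using upper[OF oi iI jI pij[symmetric]] rsum d_def di_def by simp
  have uj: "dj \<le> 2 * (t * v j) \<or> dj < t * v j + t * v i"
    using upper[OF oj jI iI pij] rsum d_def dj_def by (simp add: dist_commute add.commute)
  define Mx where "Mx = Max (v ` {1..n})"
  define Mn where "Mn = Min (v ` {1..n})"
  have fin: "finite (v ` {1..n})" "v ` {1..n} \<noteq> {}" using iI by auto
  have vMx: "v i \<le> Mx" "v j \<le> Mx" using fin iI jI by (auto simp: Mx_def)
  have vMn: "Mn \<le> v i" "Mn \<le> v j" using fin iI jI by (auto simp: Mn_def)
  have Mn0: "0 < Mn" using Min_in[OF fin] pos_rates Mn_def by auto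
  define D where "D = Mx / Mn"
  have D1: "1 \<le> D" using vMx vMn Mn0 by (simp add: D_def)
  have vD: "v a \<le> D * v b" if "v a \<le> Mx" "Mn \<le> v b" for a b
  proof -
    have "Mx = D * Mn" using Mn0 by (simp add: D_def)
    also have "\<dots> \<le> D * v b" using that D1 by (intro mult_left_mono) auto
    finally show ?thesis using that by linarith
  qed
  have "t * v i \<le> t * (D * v j)" using vD[OF vMx(1) vMn(2)] t0 by (intro mult_left_mono) auto
  then have rij: "t * v i \<le> D * (t * v j)" by (simp add: algebra_simps)
  have "t * v j \<le> t * (D * v i)" using vD[OF vMx(2) vMn(1)] t0 by (intro mult_left_mono) auto
  then have rji: "t * v j \<le> D * (t * v i)" by (simp add: algebra_simps)
  have A: "di \<le> 4*D*dj" by (rule ratio[OF di0 dj0 dis lj ui rij D1 ri0 rj0])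
  have B: "dj \<le> 4*D*di" by (rule ratio[OF dj0 di0 djs li uj rji D1 rj0 ri0])
  have D0: "0 < D" using D1 by simp
  have g1: "di / dj \<le> 4 * D" using A dj0 by (simp add: divide_le_eq)
  have g2: "1 / (4 * D) \<le> di / dj" using B dj0 di0 D0 by (simp add: divide_simps mult.commute mult.left_commute)
  have ds: "d \<le> sqrt 2"
  proof -
    have ui: "0 \<le> fst (p i) \<and> fst (p i) \<le> 1 \<and> 0 \<le> snd (p i) \<and> snd (p i) \<le> 1"
      "0 \<le> fst (p j) \<and> fst (p j) \<le> 1 \<and> 0 \<le> snd (p j) \<and> snd (p j) \<le> 1"
      using unit_square iI jI by auto
    have "d \<le> sqrt 2 * 1" unfolding d_def
      by (rule dist_le_sq) (use ui in \<open>auto simp: abs_le_iff\<close>)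
    then show ?thesis by simp
  qed
  have s0: "0 \<le> sqrt 2" by simp
  have "setdist (cell Ni) (cell Nj) \<le> d"
    using oi oj d_def by (auto simp: occupies_def intro: setdist_le_dist)
  moreover have "d \<le> 2 * (di + dj)"
    using li lj rsum ds s0 di0 dj0 by (auto simp: min_le_iff_disj)
  ultimately show ?thesis using g1 g2 by (simp add: di_def dj_def Mx_def Mn_def D_def)
qed

end
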